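(* Let $G=(V,E,L)$ be a complete hypergraph with loops, with $n:=|V|$ nodes, such that $L=L^+=\{\{j,j\}\}$ for some $j\in V$ (a single plus loop and no minus loops). Then $$\mathrm{PP}(G)=\Big\{z\in\mathbb{R}^{V\cup E\cup L}:\ z_{jj}\ \ge \sum_{J\subseteq V:\, j\in J}\frac{\big(\ell_n(J,V\setminus J)\big)^2}{\ell_{n-1}(J\setminus\{j\},V\setminus J)},\quad \ell_n(J,V\setminus J)\ge 0\ \ \forall J\subseteq V\Big\}.$$
   Context: A hypergraph with loops is a triple $G=(V,E,L)$ where $V$ is a finite node set, $E$ is a set of subsets of $V$ each of cardinality at least two (edges), and $L$ is a set of loops, each written $\{i,i\}$ for some $i\in V$ (at most one per node), partitioned as $L=L^-\cup L^+$ into minus loops and plus loops. $G$ is complete if $E$ consists of all subsets of $V$ of cardinality at least two. For such $G$, $$\mathrm{PP}(G):=\mathrm{conv}\Big\{z\in\mathbb{R}^{V\cup E\cup L}: z_{ii}\ge z_i^2\ \forall\{i,i\}\in L^+,\ z_{ii}\le z_i^2\ \forall \{i,i\}\in L^-,\ z_e=\prod_{i\in e}z_i\ \forall e\in E,\ z_i\in[0,1]\ \forall i\in V\Big\},$$ where coordinates are indexed by nodes ($z_i$), edges ($z_e$) and loops ($z_{ii}$). For a subset $S\subseteq V$ write $z_S$ with the conventions $z_\emptyset:=1$, $z_{\{i\}}:=z_i$, and $z_S$ the edge coordinate when $|S|\ge2$ (loop coordinates $z_{ii}$ are distinct from these). For disjoint $J_1,J_2\subseteq V$ with $|J_1\cup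 J_2|=d$, define $\ell_d(J_1,J_2):=\sum_{t\subseteq J_2}(-1)^{|t|}z_{J_1\cup t}$. Any expression $u^2/v$ denotes the closure of the perspective: it equals $u^2/v$ if $v>0$, $0$ if $u=v=0$, and $+\infty$ if $u\ne0$, $v=0$. *)

theory Defs
  imports "HOL-Analysis.Analysis" "HOL-Library.Extended_Real"
begin

text \<open>Node set V is the finite type 'v (V = UNIV). A point of R^(V \<union> E \<union> L) with
  L = {{j,j}} is a pair (w, y): w $ S is the node coordinate z_i for S = {i},
  the edge coordinate z_S for card S \<ge> 2; the coordinate w $ {} is unused and fixed to 0;
  y is the loop coordinate z_jj.\<close>

definition zS :: "real ^ ('v::finite set) \<Rightarrow> 'v set \<Rightarrow> real" where
  "zS w S = (if S = {} then 1 else w $ S)"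

definition ell :: "real ^ ('v::finite set) \<Rightarrow> 'v set \<Rightarrow> 'v set \<Rightarrow> real" where
  "ell w J1 J2 = (\<Sum>t\<in>Pow J2. (-1) ^ card t * zS w (J1 \<union> t))"

text \<open>Closure of the perspective u^2/v (value +\<infinity> also for v < 0, the closure convention).\<close>
definition persp :: "real \<Rightarrow> real \<Rightarrow> ereal" where
  "persp u v = (if v > 0 then ereal (u^2 / v) else if u = 0 \<and> v = 0 then 0 else \<infinity>)"

definition PP_one_plus_loop :: "'v::finite \<Rightarrow> ((real ^ 'v set) \<times> real) set" where
  "PP_one_plus_loop j = (convex hull
     {((\<chi> S. if S = {} then 0 else (\<Prod>i\<in>S. x i)), y) | (x :: 'v \<Rightarrow> real) (y :: real).
        (\<forall>i. 0 \<le> x i \<and> x i \<le> 1) \<and> y \<ge> (x j)^2})"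

end

theory Submission
  imports Defs
begin

lemma alt_sum: "finite B \<Longrightarrow> (\<Sum>R\<in>Pow B. (-1::real)^card R) = (if B = {} then 1 else 0)"
proof -
  assume f: "finite B"
  have "(\<Prod>x\<in>B. (1::real) - 1) = (\<Sum>X\<in>Pow B. (-1) ^ card X * (\<Prod>x\<in>X. 1) * (\<Prod>x\<in>B-X. 1))"
    by (rule prod_diff_conv_sum[OF f])
  then show ?thesis using f by (simp add: power_0_left)
qed

lemma ell_split:
  fixes w :: "real ^ ('v::finite set)"
  assumes "j \<in> J"
  shows "ell w (J - {j}) (UNIV - J) = ell w J (UNIV - J) + ell w (J - {j}) (UNIV - (J - {j}))"
proof -
  have e: "UNIV - (J - {j}) = insert j (UNIV - J)" using assms by auto
  have d: "Pow (UNIV - J) \<inter> insert j ` Pow (UNIV - J) = {}" using assms by auto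
  have inj: "inj_on (insert j) (Pow (UNIV - J))"
  proof (rule inj_onI)
    fix x y assume "x \<in> Pow (UNIV - J)" "y \<in> Pow (UNIV - J)" "insert j x = insert j y"
    then show "x = y" using assms by (metis Diff_iff PowD insert_ident subsetD)
  qed
  have "ell w (J - {j}) (UNIV - (J - {j})) = ell w (J - {j}) (UNIV - J) +
     (\<Sum>t\<in>insert j ` Pow (UNIV - J). (-1) ^ card t * zS w (J - {j} \<union> t))"
    unfolding ell_def e Pow_insert by (rule sum.union_disjoint) (use d in auto)
  also have "(\<Sum>t\<in>insert j ` Pow (UNIV - J). (-1) ^ card t * zS w (J - {j} \<union> t))
     = (\<Sum>t\<in>Pow (UNIV - J). (-1) ^ card (insert j t) * zS w (J - {j} \<union> insert j t))"
    by (rule sum.reindex[OF inj, unfolded comp_def])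
  also have "\<dots> = - ell w J (UNIV - J)"
    unfolding ell_def sum_negf[symmetric]
  proof (rule sum.cong[OF refl])
    fix t assume "t \<in> Pow (UNIV - J)"
    then have "j \<notin> t" "finite t" "J - {j} \<union> insert j t = J \<union> t" using assms by auto
    then show "(-1) ^ card (insert j t) * zS w (J - {j} \<union> insert j t) = - ((-1) ^ card t * zS w (J \<union> t))"
      by simp
  qed
  finally show ?thesis by simp
qed

lemma mobius:
  fixes w :: "real ^ ('v::finite set)"
  shows "zS w S = (\<Sum>K\<in>{K. S \<subseteq> K}. ell w K (UNIV - K))"
proof -
  have "(\<Sum>K\<in>{K. S \<subseteq> K}. ell w K (UNIV - K)) =
        (\<Sum>K\<in>{K. S \<subseteq> K}. \<Sum>T\<in>{T. K \<subseteq> T}. (-1) ^ card (T - K) * zS w T)"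
    unfolding ell_def
  proof (rule sum.cong[OF refl])
    fix K :: "'v set"
    have "bij_betw (\<lambda>T. T - K) {T. K \<subseteq> T} (Pow (UNIV - K))"
      by (rule bij_betwI[where g = "\<lambda>t. K \<union> t"]) auto
    then have "(\<Sum>t\<in>Pow (UNIV - K). (-1) ^ card t * zS w (K \<union> t)) =
       (\<Sum>T\<in>{T. K \<subseteq> T}. (-1) ^ card (T - K) * zS w (K \<union> (T - K)))"
      by (rule sum.reindex_bij_betw[symmetric])
    also have "\<dots> = (\<Sum>T\<in>{T. K \<subseteq> T}. (-1) ^ card (T - K) * zS w T)"
      by (rule sum.cong) (auto simp: Un_absorb1 Un_Diff_cancel)
    finally show "(\<Sum>t\<in>Pow (UNIV - K). (-1) ^ card t * zS w (K \<union> t)) =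
       (\<Sum>T\<in>{T. K \<subseteq> T}. (-1) ^ card (T - K) * zS w T)" .
  qed
  also have "\<dots> = (\<Sum>T\<in>{T. S \<subseteq> T}. \<Sum>K\<in>{K. S \<subseteq> K \<and> K \<subseteq> T}. (-1) ^ card (T - K) * zS w T)"
  proof -
    let ?f = "\<lambda>K T. (-1::real) ^ card (T - K) * zS w T"
    have "(\<Sum>K\<in>{K. S \<subseteq> K}. \<Sum>T\<in>{T. K \<subseteq> T}. ?f K T) = (\<Sum>K\<in>{K. S \<subseteq> K}. \<Sum>T\<in>{T\<in>UNIV. K \<subseteq> T}. ?f K T)"
      by simp
    also have "\<dots> = (\<Sum>T\<in>UNIV. \<Sum>K\<in>{K\<in>{K. S \<subseteq> K}. K \<subseteq> T}. ?f K T)"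
      by (rule sum.swap_restrict) auto
    also have "\<dots> = (\<Sum>T\<in>{T. S \<subseteq> T}. \<Sum>K\<in>{K\<in>{K. S \<subseteq> K}. K \<subseteq> T}. ?f K T)"
    proof (rule sum.mono_neutral_right)
      show "\<forall>i\<in>UNIV - {T. S \<subseteq> T}. (\<Sum>K\<in>{K\<in>{K. S \<subseteq> K}. K \<subseteq> i}. ?f K i) = 0"
      proof
        fix T assume "T \<in> UNIV - {T. S \<subseteq> T}"
        then have "{K\<in>{K. S \<subseteq> K}. K \<subseteq> T} = {}" by auto
        then show "(\<Sum>K\<in>{K\<in>{K. S \<subseteq> K}. K \<subseteq> T}. ?f K T) = 0" by (metis sum.empty)
      qed
    qed auto
    finally show ?thesis by simp
  qed
  also have "\<dots> = (\<Sum>T\<in>{T. S \<subseteq> T}. if T = S then zS w T else 0)"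
  proof (rule sum.cong[OF refl])
    fix T assume T: "T \<in> {T. S \<subseteq> T}"
    have "bij_betw (\<lambda>K. T - K) {K. S \<subseteq> K \<and> K \<subseteq> T} (Pow (T - S))"
      by (rule bij_betwI[where g = "\<lambda>R. T - R"]) (use T in auto)
    then have "(\<Sum>K\<in>{K. S \<subseteq> K \<and> K \<subseteq> T}. (-1::real) ^ card (T - K)) = (\<Sum>R\<in>Pow (T - S). (-1) ^ card R)"
      by (rule sum.reindex_bij_betw)
    also have "\<dots> = (if T = S then 1 else 0)" using T by (simp add: alt_sum)
    finally show "(\<Sum>K\<in>{K. S \<subseteq> K \<and> K \<subseteq> T}. (-1) ^ card (T - K) * zS w T) = (if T = S then zS w T else 0)"
      by (simp add: sum_distrib_right[symmetric])
  qed
  also have "\<dots> = zS w S" by (simp add: sum.delta')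
  finally show ?thesis by simp
qed

definition gvec :: "('v::finite \<Rightarrow> real) \<Rightarrow> real ^ ('v set)" where
  "gvec x = (\<chi> S. if S = {} then 0 else (\<Prod>i\<in>S. x i))"

lemma zS_gvec: "zS (gvec x) S = (\<Prod>i\<in>S. x i)"
  by (simp add: zS_def gvec_def)

lemma ell_gvec:
  fixes x :: "'v::finite \<Rightarrow> real"
  assumes "J1 \<inter> J2 = {}"
  shows "ell (gvec x) J1 J2 = (\<Prod>i\<in>J1. x i) * (\<Prod>i\<in>J2. 1 - x i)"
proof -
  have "ell (gvec x) J1 J2 = (\<Sum>t\<in>Pow J2. (\<Prod>i\<in>J1. x i) * ((-1) ^ card t * (\<Prod>i\<in>t. x i)))"
    unfolding ell_def zS_gvec
  proof (rule sum.cong[OF refl])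
    fix t assume "t \<in> Pow J2"
    then have "J1 \<inter> t = {}" using assms by auto
    then have "(\<Prod>i\<in>J1 \<union> t. x i) = (\<Prod>i\<in>J1. x i) * (\<Prod>i\<in>t. x i)"
      by (simp add: prod.union_disjoint)
    then show "(-1) ^ card t * (\<Prod>i\<in>J1 \<union> t. x i) = (\<Prod>i\<in>J1. x i) * ((-1) ^ card t * (\<Prod>i\<in>t. x i))"
      by simp
  qed
  also have "\<dots> = (\<Prod>i\<in>J1. x i) * (\<Prod>i\<in>J2. 1 - x i)"
    by (simp add: sum_distrib_left[symmetric] prod_diff_conv_sum)
  finally show ?thesis .
qed

lemma ell_comb:
  fixes W :: "'a \<Rightarrow> real ^ ('v::finite set)"
  assumes "finite I" "sum mu I = 1"
  shows "ell (\<Sum>s\<in>I. mu s *\<^sub>R W s) J1 J2 = (\<Sum>s\<in>I. mu s * ell (W s) J1 J2)"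
proof -
  have z: "zS (\<Sum>s\<in>I. mu s *\<^sub>R W s) T = (\<Sum>s\<in>I. mu s * zS (W s) T)" for T
    using assms by (simp add: zS_def sum_component sum_distrib_right[symmetric])
  show ?thesis unfolding ell_def z
    by (simp add: sum_distrib_left sum_distrib_right mult_ac) (rule sum.swap)
qed

lemma marg_one:
  fixes x :: "'v::finite \<Rightarrow> real"
  shows "(\<Sum>J\<in>{J. j \<in> J}. (\<Prod>i\<in>J - {j}. x i) * (\<Prod>i\<in>UNIV - J. 1 - x i)) = 1"
proof -
  have "(1::real) = (\<Prod>i\<in>UNIV - {j}. x i + (1 - x i))" by simp
  also have "\<dots> = (\<Sum>X\<in>Pow (UNIV - {j}). (\<Prod>i\<in>X. x i) * (\<Prod>i\<in>(UNIV - {j}) - X. 1 - x i))"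
    by (rule prod_add) simp
  also have "\<dots> = (\<Sum>J\<in>{J. j \<in> J}. (\<Prod>i\<in>J - {j}. x i) * (\<Prod>i\<in>UNIV - J. 1 - x i))"
  proof -
    have hh: "\<And>J. j \<in> J \<Longrightarrow> UNIV - {j} - (J - {j}) = UNIV - J" by auto
    show ?thesis
    proof (rule sum.reindex_bij_witness[where i = "\<lambda>J. J - {j}" and j = "insert j"])
      fix a assume "a \<in> Pow (UNIV - {j})"
      then have e1: "insert j a - {j} = a" and e2: "UNIV - insert j a = UNIV - {j} - a" by auto
      show "(\<Prod>i\<in>insert j a - {j}. x i) * (\<Prod>i\<in>UNIV - insert j a. 1 - x i) =
         (\<Prod>i\<in>a. x i) * (\<Prod>i\<in>(UNIV - {j}) - a. 1 - x i)" unfolding e1 e2 ..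
    qed (auto simp: hh)
  qed
  finally show ?thesis by simp
qed

lemma reidx:
  fixes f :: "'v::finite set \<Rightarrow> real"
  shows "(\<Sum>A\<in>{A. j \<notin> A}. f (insert j A)) = (\<Sum>K\<in>{K. j \<in> K}. f K)"
  by (rule sum.reindex_bij_witness[where i = "\<lambda>J. J - {j}" and j = "insert j"]) auto

lemma split_j:
  fixes f :: "'v::finite set \<Rightarrow> real"
  shows "(\<Sum>K\<in>UNIV. f K) = (\<Sum>A\<in>{A. j \<notin> A}. f A) + (\<Sum>A\<in>{A. j \<notin> A}. f (insert j A))"
proof -
  have "(\<Sum>K\<in>UNIV. f K) = (\<Sum>A\<in>{A. j \<notin> A}. f A) + (\<Sum>K\<in>{K. j \<in> K}. f K)"
  proof -
    have "(UNIV::'v set set) = {A. j \<notin> A} \<union> {K. j \<in> K}" by auto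
    then have "(\<Sum>K\<in>UNIV. f K) = (\<Sum>K\<in>{A. j \<notin> A} \<union> {K. j \<in> K}. f K)" by simp
    also have "\<dots> = (\<Sum>A\<in>{A. j \<notin> A}. f A) + (\<Sum>K\<in>{K. j \<in> K}. f K)"
      by (rule sum.union_disjoint) auto
    finally show ?thesis .
  qed
  then show ?thesis by (simp add: reidx)
qed

lemma cs_persp:
  fixes mu c x :: "'a \<Rightarrow> real"
  assumes S: "finite S" and mu: "\<And>s. s \<in> S \<Longrightarrow> 0 \<le> mu s" and c: "\<And>s. s \<in> S \<Longrightarrow> 0 \<le> c s"
  shows "persp (\<Sum>s\<in>S. mu s * (x s * c s)) (\<Sum>s\<in>S. mu s * c s) \<le> ereal (\<Sum>s\<in>S. mu s * (x s ^ 2 * c s))"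
proof -
  define u where "u = (\<Sum>s\<in>S. mu s * (x s * c s))"
  define v where "v = (\<Sum>s\<in>S. mu s * c s)"
  define q where "q = (\<Sum>s\<in>S. mu s * (x s ^ 2 * c s))"
  have v0: "v \<ge> 0" unfolding v_def using mu c by (intro sum_nonneg) simp
  have q0: "q \<ge> 0" unfolding q_def using mu c by (intro sum_nonneg) simp
  show ?thesis
  proof (cases "v > 0")
    case True
    define m where "m = u / v"
    have "0 \<le> (\<Sum>s\<in>S. mu s * c s * (x s - m)^2)" using mu c by (intro sum_nonneg) simp
    also have "\<dots> = (\<Sum>s\<in>S. mu s * (x s ^ 2 * c s) - 2 * m * (mu s * (x s * c s)) + m^2 * (mu s * c s))"
      by (rule sum.cong) (simp_all add: power2_eq_square algebra_simps)
    also have "\<dots> = q - 2 * m * u + m^2 * v"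
      unfolding q_def u_def v_def by (simp add: sum.distrib sum_subtractf sum_distrib_left)
    also have "\<dots> = q - u^2 / v" unfolding m_def using True by (simp add: power2_eq_square field_simps)
    finally have "u^2 / v \<le> q" by simp
    then show ?thesis using True unfolding persp_def u_def[symmetric] v_def[symmetric] q_def[symmetric] by simp
  next
    case False
    then have "v = 0" using v0 by simp
    then have "\<forall>s\<in>S. mu s * c s = 0" unfolding v_def using S mu c by (subst sum_nonneg_eq_0_iff[symmetric]) auto
    then have "u = 0" unfolding u_def by (auto intro!: sum.neutral)
    then show ?thesis using \<open>v = 0\<close> q0 unfolding persp_def u_def[symmetric] v_def[symmetric] q_def[symmetric] by simp
  qed
qed

lemma PP_eq: "PP_one_plus_loop j = convex hull {(gvec x, y) | x y. (\<forall>i. 0 \<le> x i \<and> x i \<le> 1) \<and> y \<ge> (x j)^2}"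
  unfolding PP_one_plus_loop_def gvec_def ..

lemma forward:
  fixes j :: "'v::finite"
  assumes "(w, y) \<in> PP_one_plus_loop j"
  shows "w $ {} = 0 \<and>
       ereal y \<ge> (\<Sum>J\<in>{J. j \<in> J}. persp (ell w J (UNIV - J)) (ell w (J - {j}) (UNIV - J))) \<and>
       (\<forall>J. ell w J (UNIV - J) \<ge> 0)"
proof -
  obtain S mu where S: "finite S" "S \<subseteq> {(gvec x, y) | x y. (\<forall>i. 0 \<le> x i \<and> x i \<le> 1) \<and> y \<ge> (x j)^2}"
    and mu: "\<forall>s\<in>S. 0 \<le> mu s" "sum mu S = 1" and wy: "(\<Sum>s\<in>S. mu s *\<^sub>R s) = (w, y)"
    using assms unfolding PP_eq convex_hull_explicit by blast
  have "\<forall>s\<in>S. \<exists>x. fst s = gvec x \<and> (\<forall>i. 0 \<le> x i \<and> x i \<le> 1) \<and> snd s \<ge> (x j)^2"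
    using S(2) by force
  then obtain X where X: "\<And>s. s \<in> S \<Longrightarrow> fst s = gvec (X s) \<and> (\<forall>i. 0 \<le> X s i \<and> X s i \<le> 1) \<and> snd s \<ge> (X s j)^2"
    by metis
  have w: "w = (\<Sum>s\<in>S. mu s *\<^sub>R gvec (X s))"
  proof -
    have "w = fst (\<Sum>s\<in>S. mu s *\<^sub>R s)" using wy by simp
    also have "\<dots> = (\<Sum>s\<in>S. mu s *\<^sub>R fst s)" by (simp add: fst_sum)
    also have "\<dots> = (\<Sum>s\<in>S. mu s *\<^sub>R gvec (X s))" using X by (intro sum.cong) auto
    finally show ?thesis .
  qed
  have y: "y = (\<Sum>s\<in>S. mu s * snd s)"
  proof -
    have "y = snd (\<Sum>s\<in>S. mu s *\<^sub>R s)" using wy by simp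
    also have "\<dots> = (\<Sum>s\<in>S. mu s * snd s)" by (simp add: snd_sum)
    finally show ?thesis .
  qed
  have a: "w $ {} = 0" unfolding w by (simp add: sum_component gvec_def)
  define c where "c = (\<lambda>s J. (\<Prod>i\<in>J - {j}. X s i) * (\<Prod>i\<in>UNIV - J. 1 - X s i))"
  have c0: "0 \<le> c s J" if "s \<in> S" for s J
    unfolding c_def using X[OF that] by (intro mult_nonneg_nonneg prod_nonneg) auto
  have ellw: "ell w J1 J2 = (\<Sum>s\<in>S. mu s * ell (gvec (X s)) J1 J2)" for J1 J2
    unfolding w by (rule ell_comb) (use S mu in auto)
  have b: "ell w J (UNIV - J) \<ge> 0" for J
    unfolding ellw
  proof (intro sum_nonneg mult_nonneg_nonneg)
    fix s assume s: "s \<in> S"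
    show "0 \<le> mu s" using mu s by auto
    show "0 \<le> ell (gvec (X s)) J (UNIV - J)" using X[OF s]
      by (auto simp: ell_gvec intro!: prod_nonneg mult_nonneg_nonneg)
  qed
  have u_eq: "ell w J (UNIV - J) = (\<Sum>s\<in>S. mu s * (X s j * c s J))" if "j \<in> J" for J
    unfolding ellw
  proof (rule sum.cong[OF refl])
    fix s assume "s \<in> S"
    have "(\<Prod>i\<in>J. X s i) = X s j * (\<Prod>i\<in>J - {j}. X s i)" using that by (simp add: prod.remove)
    then show "mu s * ell (gvec (X s)) J (UNIV - J) = mu s * (X s j * c s J)"
      by (simp add: ell_gvec c_def)
  qed
  have v_eq: "ell w (J - {j}) (UNIV - J) = (\<Sum>s\<in>S. mu s * c s J)" if "j \<in> J" for J
  proof -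
    have d: "(J - {j}) \<inter> (UNIV - J) = {}" by auto
    show ?thesis unfolding ellw c_def by (simp add: ell_gvec[OF d])
  qed
  have "(\<Sum>J\<in>{J. j \<in> J}. persp (ell w J (UNIV - J)) (ell w (J - {j}) (UNIV - J)))
     \<le> (\<Sum>J\<in>{J. j \<in> J}. ereal (\<Sum>s\<in>S. mu s * (X s j ^ 2 * c s J)))"
  proof (rule sum_mono)
    fix J assume "J \<in> {J. j \<in> J}"
    then show "persp (ell w J (UNIV - J)) (ell w (J - {j}) (UNIV - J)) \<le> ereal (\<Sum>s\<in>S. mu s * (X s j ^ 2 * c s J))"
    proof -
      assume J: "J \<in> {J. j \<in> J}"
      have "persp (\<Sum>s\<in>S. mu s * (X s j * c s J)) (\<Sum>s\<in>S. mu s * c s J) \<le> ereal (\<Sum>s\<in>S. mu s * (X s j ^ 2 * c s J))"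
        using S mu c0 by (intro cs_persp) auto
      then show ?thesis using u_eq[of J] v_eq[of J] J by simp
    qed
  qed
  also have "\<dots> = ereal (\<Sum>s\<in>S. mu s * X s j ^ 2 * (\<Sum>J\<in>{J. j \<in> J}. c s J))"
  proof -
    have "(\<Sum>s\<in>S. mu s * X s j ^ 2 * (\<Sum>J\<in>{J. j \<in> J}. c s J)) =
       (\<Sum>s\<in>S. \<Sum>J\<in>{J. j \<in> J}. mu s * (X s j ^ 2 * c s J))"
      by (simp add: sum_distrib_left mult.assoc)
    also have "\<dots> = (\<Sum>J\<in>{J. j \<in> J}. \<Sum>s\<in>S. mu s * (X s j ^ 2 * c s J))"
      by (rule sum.swap)
    finally show ?thesis by simp
  qed
  also have "\<dots> = ereal (\<Sum>s\<in>S. mu s * X s j ^ 2)"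
    unfolding c_def marg_one by simp
  also have "\<dots> \<le> ereal y" unfolding y using mu X by (simp add: sum_mono mult_left_mono)
  finally show ?thesis using a b by simp
qed

lemma prod_ind:
  fixes S A :: "'v::finite set"
  shows "(\<Prod>i\<in>S. if i \<in> A then 1 else (0::real)) = (if S \<subseteq> A then 1 else 0)"
proof (cases "S \<subseteq> A")
  case True
  then show ?thesis by (auto intro!: prod.neutral)
next
  case False
  then obtain i where "i \<in> S" "i \<notin> A" by auto
  then show ?thesis using False by (auto intro!: prod_zero)
qed

lemma backward:
  fixes j :: "'v::finite"
  assumes w0: "w $ {} = 0"
    and Y: "ereal y \<ge> (\<Sum>J\<in>{J. j \<in> J}. persp (ell w J (UNIV - J)) (ell w (J - {j}) (UNIV - J)))"
    and U: "\<forall>J. ell w J (UNIV - J) \<ge> 0"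
  shows "(w, y) \<in> PP_one_plus_loop j"
proof -
  define u where "u = (\<lambda>K. ell w K (UNIV - K))"
  define I where "I = {A :: 'v set. j \<notin> A}"
  define p where "p = (\<lambda>A. u A + u (insert j A))"
  define q where "q = (\<lambda>A. if p A > 0 then u (insert j A)^2 / p A else 0)"
  define xj where "xj = (\<lambda>A. if p A > 0 then u (insert j A) / p A else 0)"
  define X where "X = (\<lambda>A i. if i = j then xj A else if i \<in> A then 1 else (0::real))"
  define F where "F = (\<Sum>A\<in>I. q A)"
  have u0: "\<And>K. u K \<ge> 0" using U unfolding u_def by auto
  have p0: "\<And>A. p A \<ge> 0" unfolding p_def using u0 by (simp add: add_nonneg_nonneg)
  have pu: "\<And>A. p A * xj A = u (insert j A)"
  proof -
    fix A show "p A * xj A = u (insert j A)"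
    proof (cases "p A > 0")
      case True then show ?thesis unfolding xj_def by simp
    next
      case False
      then have "p A = 0" using p0[of A] by simp
      then have "u (insert j A) = 0" unfolding p_def using u0[of A] u0[of "insert j A"] by simp
      then show ?thesis unfolding xj_def using False by simp
    qed
  qed
  have pq: "\<And>A. p A * xj A ^ 2 = q A"
    unfolding xj_def q_def by (auto simp: power2_eq_square)
  have persp_eq: "persp (ell w J (UNIV - J)) (ell w (J - {j}) (UNIV - J)) = ereal (q (J - {j}))"
    if J: "j \<in> J" for J
  proof -
    have e: "insert j (J - {j}) = J" using J by auto
    have v: "ell w (J - {j}) (UNIV - J) = p (J - {j})"
      unfolding p_def u_def e ell_split[OF J] by simp
    show ?thesis
    proof (cases "p (J - {j}) > 0")
      case True
      then show ?thesis unfolding v persp_def q_def e u_def by simp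
    next
      case False
      then have "p (J - {j}) = 0" using p0[of "J - {j}"] by simp
      then have "u J = 0" unfolding p_def e using u0[of J] u0[of "J - {j}"] by simp
      then show ?thesis unfolding v persp_def q_def using \<open>p (J - {j}) = 0\<close> by (simp add: u_def)
    qed
  qed
  have "(\<Sum>J\<in>{J. j \<in> J}. persp (ell w J (UNIV - J)) (ell w (J - {j}) (UNIV - J)))
      = (\<Sum>J\<in>{J. j \<in> J}. ereal (q (J - {j})))"
    by (rule sum.cong) (auto simp: persp_eq)
  also have "\<dots> = ereal (\<Sum>J\<in>{J. j \<in> J}. q (J - {j}))" by simp
  also have "(\<Sum>J\<in>{J. j \<in> J}. q (J - {j})) = (\<Sum>A\<in>I. q (insert j A - {j}))"
    unfolding I_def by (rule reidx[symmetric])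
  also have "\<dots> = F" unfolding F_def I_def by (rule sum.cong) auto
  finally have yF: "F \<le> y" using Y by simp
  define d where "d = y - F"
  have d0: "d \<ge> 0" using yF unfolding d_def by simp
  have sump: "sum p I = 1"
  proof -
    have "1 = zS w {}" by (simp add: zS_def)
    also have "\<dots> = (\<Sum>K\<in>UNIV. u K)"
    proof -
      have "{K. {} \<subseteq> K} = (UNIV :: 'v set set)" by auto
      then show ?thesis unfolding mobius u_def by (metis (no_types))
    qed
    also have "\<dots> = (\<Sum>A\<in>I. u A) + (\<Sum>A\<in>I. u (insert j A))" unfolding I_def by (rule split_j)
    also have "\<dots> = sum p I" unfolding p_def by (simp add: sum.distrib)
    finally show ?thesis by simp
  qed
  define P where "P = (\<lambda>A. (gvec (X A), xj A ^ 2 + d))"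
  have PG: "P A \<in> {(gvec x, y) | x y. (\<forall>i. 0 \<le> x i \<and> x i \<le> 1) \<and> y \<ge> (x j)^2}" for A
  proof -
    have "0 \<le> xj A \<and> xj A \<le> 1"
    proof (cases "p A > 0")
      case True
      have "u (insert j A) \<le> p A" unfolding p_def using u0[of A] by simp
      then show ?thesis using True u0[of "insert j A"] unfolding xj_def by simp
    qed (simp add: xj_def)
    then have "\<forall>i. 0 \<le> X A i \<and> X A i \<le> 1" unfolding X_def by auto
    moreover have "X A j = xj A" unfolding X_def by simp
    ultimately show ?thesis unfolding P_def using d0 by force
  qed
  have snd_eq: "(\<Sum>A\<in>I. p A * (xj A ^ 2 + d)) = y"
  proof -
    have "(\<Sum>A\<in>I. p A * (xj A ^ 2 + d)) = (\<Sum>A\<in>I. q A) + d * sum p I"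
      by (simp add: distrib_left sum.distrib pq sum_distrib_left mult.commute)
    then show ?thesis using sump unfolding F_def[symmetric] d_def by simp
  qed
  have fst_eq: "(\<Sum>A\<in>I. p A *\<^sub>R gvec (X A)) = w"
  proof (subst vec_eq_iff, intro allI)
    fix S :: "'v set"
    show "(\<Sum>A\<in>I. p A *\<^sub>R gvec (X A)) $ S = w $ S"
    proof (cases "S = {}")
      case True
      then show ?thesis using w0 by (simp add: sum_component gvec_def)
    next
      case Sne: False
      define h where "h = (\<lambda>K. if S \<subseteq> K then u K else 0)"
      have "w $ S = zS w S" using Sne by (simp add: zS_def)
      also have "\<dots> = (\<Sum>K\<in>{K. S \<subseteq> K}. u K)" unfolding mobius u_def ..
      also have "\<dots> = (\<Sum>K\<in>UNIV. h K)" unfolding h_def by (simp add: sum.If_cases)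
      also have "\<dots> = (\<Sum>A\<in>I. h A) + (\<Sum>A\<in>I. h (insert j A))" unfolding I_def by (rule split_j)
      also have "\<dots> = (\<Sum>A\<in>I. p A * gvec (X A) $ S)"
        unfolding sum.distrib[symmetric]
      proof (rule sum.cong[OF refl])
        fix A assume A: "A \<in> I"
        then have jA: "j \<notin> A" unfolding I_def by simp
        have g: "gvec (X A) $ S = (\<Prod>i\<in>S. X A i)" using Sne by (simp add: gvec_def)
        show "h A + h (insert j A) = p A * gvec (X A) $ S"
        proof (cases "j \<in> S")
          case True
          have "(\<Prod>i\<in>S. X A i) = X A j * (\<Prod>i\<in>S - {j}. X A i)" using True by (simp add: prod.remove)
          also have "(\<Prod>i\<in>S - {j}. X A i) = (\<Prod>i\<in>S - {j}. if i \<in> A then 1 else 0)"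
            unfolding X_def by (rule prod.cong) auto
          also have "\<dots> = (if S - {j} \<subseteq> A then 1 else 0)" by (rule prod_ind)
          finally have "(\<Prod>i\<in>S. X A i) = xj A * (if S - {j} \<subseteq> A then 1 else 0)"
            unfolding X_def by simp
          moreover have "h A = 0" unfolding h_def using True jA by auto
          moreover have "(S \<subseteq> insert j A) = (S - {j} \<subseteq> A)" by auto
          ultimately show ?thesis unfolding g h_def using pu[of A] by auto
        next
          case False
          have "(\<Prod>i\<in>S. X A i) = (\<Prod>i\<in>S. if i \<in> A then 1 else 0)"
            unfolding X_def using False by (intro prod.cong) auto
          also have "\<dots> = (if S \<subseteq> A then 1 else 0)" by (rule prod_ind)
          finally have "(\<Prod>i\<in>S. X A i) = (if S \<subseteq> A then 1 else 0)" .
          moreover have "(S \<subseteq> insert j A) = (S \<subseteq> A)" using False by auto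
          ultimately show ?thesis unfolding g h_def p_def by auto
        qed
      qed
      finally show ?thesis by (simp add: sum_component)
    qed
  qed
  have "(\<Sum>A\<in>I. p A *\<^sub>R P A) = (w, y)"
    unfolding P_def by (simp add: prod_eq_iff fst_sum snd_sum fst_eq snd_eq)
  moreover have "(\<Sum>A\<in>I. p A *\<^sub>R P A) \<in> PP_one_plus_loop j"
    unfolding PP_eq
    by (rule convex_sum) (auto simp: sump p0 intro!: hull_inc PG)
  ultimately show ?thesis by simp
qed

theorem theorem1:
  fixes j :: "'v::finite"
  shows "PP_one_plus_loop j =
    {(w, y). w $ {} = 0 \<and>
       ereal y \<ge> (\<Sum>J\<in>{J. j \<in> J}. persp (ell w J (UNIV - J)) (ell w (J - {j}) (UNIV - J))) \<and>
       (\<forall>J. ell w J (UNIV - J) \<ge> 0)}"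
  using forward backward by fast

end
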